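(* Fix odd positive integers $k$ and $d$. For every $\delta\in(0,1)$ there exists $\gamma>0$ such that if $r_n\ge\gamma\sqrt{\log n/n}$, then for all $n$ large enough, $$\inf_Q\mathbb{P}(Q\text{ is }\delta\text{-good})\ge 1-2(mkd)^2 n^{-\gamma^2\delta^2/(24d^2)},$$ where the infimum is over all cells $Q$. In particular, if $\gamma^2>24d^2/\delta^2$, then $$\lim_{n\to\infty}\mathbb{P}(\text{every cell }Q\text{ is }\delta\text{-good})=1.$$
   Context: $[0,1]^2$ is viewed as a torus and $\mathbf X=\{X_1,\dots,X_n\}$ are independent uniform points in $[0,1]^2$; $r_n>0$. For odd positive integers $k,d$ set $m=\lceil 2/(kr_n)\rceil$ and $r_n'=2/(km)$. The torus is partitioned into $m^2$ congruent axis-parallel squares of side $1/m$, called cells, and each cell is partitioned into $k^2d^2$ congruent squares of side $1/(mkd)=r_n'/(2d)$, called boxes. For $\delta\in(0,1)$, a cell $Q$ is $\delta$-good if every box $S$ contained in $Q$ satisfies $\frac{(1-\delta)nr_n^2}{4d^2}\le|\mathbf X\cap S|\le\frac{(1+\delta)nr_n^2}{4d^2}$. *)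

theory Defs
  imports "HOL-Probability.Probability"
begin

definition unif_sq :: "(real \<times> real) measure" where
  "unif_sq = uniform_measure lborel ({0..<1} \<times> {0..<1})"

definition sample_space :: "nat \<Rightarrow> (nat \<Rightarrow> real \<times> real) measure" where
  "sample_space n = PiM {..<n} (\<lambda>_. unif_sq)"

definition ncells :: "nat \<Rightarrow> real \<Rightarrow> nat" where
  "ncells k r = nat \<lceil>2 / (real k * r)\<rceil>"

definition grid_sq :: "nat \<Rightarrow> nat \<times> nat \<Rightarrow> (real \<times> real) set" where
  "grid_sq N ij = {real (fst ij) / real N ..< (real (fst ij) + 1) / real N}
                 \<times> {real (snd ij) / real N ..< (real (snd ij) + 1) / real N}"

definition cells :: "nat \<Rightarrow> real \<Rightarrow> (real \<times> real) set set" where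
  "cells k r = grid_sq (ncells k r) ` ({..<ncells k r} \<times> {..<ncells k r})"

definition boxes :: "nat \<Rightarrow> nat \<Rightarrow> real \<Rightarrow> (real \<times> real) set set" where
  "boxes k d r = (let N = ncells k r * k * d in grid_sq N ` ({..<N} \<times> {..<N}))"

definition npts :: "nat \<Rightarrow> (nat \<Rightarrow> real \<times> real) \<Rightarrow> (real \<times> real) set \<Rightarrow> nat" where
  "npts n X S = card {i. i < n \<and> X i \<in> S}"

definition delta_good ::
  "nat \<Rightarrow> nat \<Rightarrow> real \<Rightarrow> nat \<Rightarrow> real \<Rightarrow> (nat \<Rightarrow> real \<times> real) \<Rightarrow> (real \<times> real) set \<Rightarrow> bool" where
  "delta_good k d \<delta> n r X Q \<longleftrightarrow>
     (\<forall>S\<in>boxes k d r. S \<subseteq> Q \<longrightarrow>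
        (1 - \<delta>) * real n * r\<^sup>2 / (4 * real d ^ 2) \<le> real (npts n X S) \<and>
        real (npts n X S) \<le> (1 + \<delta>) * real n * r\<^sup>2 / (4 * real d ^ 2))"

end

theory Submission
  imports Defs
begin

lemma emeasure_rect:
  fixes a b c d :: real
  assumes "a \<le> b" "c \<le> d"
  shows "emeasure lborel ({a..<b} \<times> {c..<d}) = ennreal ((b-a)*(d-c))"
proof -
  have "emeasure (lborel \<Otimes>\<^sub>M lborel) ({a..<b} \<times> {c..<d}) = emeasure lborel {a..<b} * emeasure lborel {c..<d}"
    by (rule lborel.emeasure_pair_measure_Times) auto
  then show ?thesis using assms by (simp add: lborel_prod ennreal_mult)
qed

lemma unif_sq_prob: "prob_space unif_sq"
  unfolding unif_sq_def
  by (rule prob_space_uniform_measure) (simp_all add: emeasure_rect)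

lemma space_unif_sq[simp]: "space unif_sq = UNIV"
  unfolding unif_sq_def by simp

lemma sets_unif_sq[simp]: "sets unif_sq = sets borel"
  unfolding unif_sq_def by simp

lemma grid_sq_meas:
  assumes "i < N" "j < N"
  shows "emeasure unif_sq (grid_sq N (i,j)) = ennreal (1 / real N ^ 2)"
proof -
  have N: "N > 0" using assms by auto
  have sub: "grid_sq N (i,j) \<subseteq> {0..<1} \<times> {0..<1}"
  proof
    fix x assume "x \<in> grid_sq N (i,j)"
    then have "real i / N \<le> fst x" "fst x < (real i + 1) / N" "real j / N \<le> snd x" "snd x < (real j + 1) / N"
      by (auto simp: grid_sq_def)
    moreover have "(real i + 1) / N \<le> 1" "(real j + 1) / N \<le> 1" using assms N by (auto simp: field_simps)
    moreover have "real i / N \<ge> 0" "real j / N \<ge> 0" by auto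
    ultimately have "0 \<le> fst x" "fst x < 1" "0 \<le> snd x" "snd x < 1" by linarith+
    then show "x \<in> {0..<1} \<times> {0..<1}" by (cases x) auto
  qed
  have "emeasure unif_sq (grid_sq N (i,j)) = emeasure lborel (grid_sq N (i,j))"
    unfolding unif_sq_def using sub
    by (subst emeasure_uniform_measure) (auto simp: grid_sq_def emeasure_rect Int_absorb1 divide_ennreal_def intro!: borel_Times)
  also have "\<dots> = ennreal (1 / real N ^ 2)"
    unfolding grid_sq_def using N
    by (subst emeasure_rect) (auto simp: field_simps power2_eq_square)
  finally show ?thesis .
qed

lemma npts_sum: "real (npts n X S) = (\<Sum>i<n. indicator S (X i))"
proof -
  have "(\<Sum>i<n. indicator S (X i) :: real) = (\<Sum>i<n. if X i \<in> S then 1 else 0)"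
    by (rule sum.cong) (auto simp: indicator_def)
  also have "\<dots> = sum (\<lambda>_. 1) {i\<in>{..<n}. X i \<in> S}"
    by (rule sum.inter_filter[symmetric]) simp
  also have "{i\<in>{..<n}. X i \<in> S} = {i. i < n \<and> X i \<in> S}" by auto
  finally show ?thesis unfolding npts_def by simp
qed

lemma unif_single:
  assumes S: "S \<in> sets borel"
  shows "(\<integral>\<^sup>+x. ennreal (exp (t * indicator S x)) \<partial>unif_sq)
     = ennreal (1 - measure unif_sq S + measure unif_sq S * exp t)"
proof -
  interpret U: prob_space unif_sq by (rule unif_sq_prob)
  have S': "S \<in> sets unif_sq" using S by simp
  have C: "- S \<in> sets unif_sq" using S by simp
  have eq: "\<And>x. ennreal (exp (t * indicator S x)) = ennreal (exp t) * indicator S x + indicator (- S) x"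
    by (auto simp: indicator_def)
  have "(\<integral>\<^sup>+x. ennreal (exp (t * indicator S x)) \<partial>unif_sq)
      = (\<integral>\<^sup>+x. ennreal (exp t) * indicator S x \<partial>unif_sq) + (\<integral>\<^sup>+x. indicator (- S) x \<partial>unif_sq)"
    unfolding eq by (rule nn_integral_add) (intro borel_measurable_times_ennreal borel_measurable_const borel_measurable_indicator S' C)+
  also have "\<dots> = ennreal (exp t) * emeasure unif_sq S + emeasure unif_sq (- S)"
    using S' C by (simp add: nn_integral_cmult_indicator)
  also have "emeasure unif_sq (- S) = ennreal (1 - measure unif_sq S)"
  proof -
    have "- S = space unif_sq - S" by auto
    then show ?thesis using U.prob_compl[OF S'] U.emeasure_eq_measure by simp
  qed
  also have "emeasure unif_sq S = ennreal (measure unif_sq S)" by (simp add: U.emeasure_eq_measure)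
  also have "ennreal (exp t) * ennreal (measure unif_sq S) + ennreal (1 - measure unif_sq S)
     = ennreal (exp t * measure unif_sq S) + ennreal (1 - measure unif_sq S)"
    by (simp add: ennreal_mult)
  also have "\<dots> = ennreal (exp t * measure unif_sq S + (1 - measure unif_sq S))"
    using U.prob_le_1[of S] by (intro ennreal_plus[symmetric]) auto
  finally show ?thesis by (simp add: algebra_simps)
qed

lemma mgf:
  assumes S: "S \<in> sets borel"
  shows "(\<integral>\<^sup>+X. ennreal (exp (t * real (npts n X S))) \<partial>sample_space n)
     = ennreal ((1 - measure unif_sq S + measure unif_sq S * exp t) ^ n)"
proof -
  interpret P: product_sigma_finite "\<lambda>_::nat. unif_sq"
    by (simp add: product_sigma_finite_def prob_space_imp_sigma_finite unif_sq_prob)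
  have eq: "\<And>X. ennreal (exp (t * real (npts n X S))) = (\<Prod>i\<in>{..<n}. ennreal (exp (t * indicator S (X i))))"
  proof -
    fix X :: "nat \<Rightarrow> real \<times> real"
    have "exp (t * real (npts n X S)) = (\<Prod>i\<in>{..<n}. exp (t * indicator S (X i)))"
      unfolding npts_sum sum_distrib_left by (rule exp_sum) simp
    then show "ennreal (exp (t * real (npts n X S))) = (\<Prod>i\<in>{..<n}. ennreal (exp (t * indicator S (X i))))"
      by (simp add: prod_ennreal)
  qed
  have "(\<integral>\<^sup>+X. ennreal (exp (t * real (npts n X S))) \<partial>sample_space n)
      = (\<Prod>i\<in>{..<n}. \<integral>\<^sup>+x. ennreal (exp (t * indicator S x)) \<partial>unif_sq)"
    unfolding eq sample_space_def
  proof (rule P.product_nn_integral_prod)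
    fix i :: nat
    have e: "(\<lambda>x. ennreal (exp (t * indicator S x))) = (\<lambda>x. ennreal (1 + (exp t - 1) * indicator S x))"
      by (auto simp: indicator_def)
    show "(\<lambda>x. ennreal (exp (t * indicator S x))) \<in> borel_measurable unif_sq"
      unfolding e using S
      by (intro measurable_compose[OF _ measurable_ennreal] borel_measurable_add borel_measurable_times borel_measurable_const borel_measurable_indicator) simp
  qed simp
  also have "\<dots> = ennreal ((1 - measure unif_sq S + measure unif_sq S * exp t) ^ n)"
  proof -
    have "measure unif_sq S \<le> 1" by (rule prob_space.prob_le_1[OF unif_sq_prob])
    then have h: "0 \<le> 1 - measure unif_sq S + measure unif_sq S * exp t" by simp
    show ?thesis using S h by (simp add: unif_single ennreal_power)
  qed
  finally show ?thesis .
qed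


lemma sample_prob: "prob_space (sample_space n)"
  unfolding sample_space_def by (intro prob_space_PiM unif_sq_prob)

lemma count_meas[measurable]:
  assumes S: "S \<in> sets borel"
  shows "(\<lambda>X. real (npts n X S)) \<in> borel_measurable (sample_space n)"
proof -
  have S': "S \<in> sets unif_sq" using S by simp
  show ?thesis
    unfolding npts_sum sample_space_def
    by (intro borel_measurable_sum measurable_compose[OF measurable_component_singleton borel_measurable_indicator] S') auto
qed

lemma count_event_meas:
  assumes S: "S \<in> sets borel"
  shows "{X \<in> space (sample_space n). a \<le> real (npts n X S)} \<in> sets (sample_space n)"
    "{X \<in> space (sample_space n). real (npts n X S) \<le> a} \<in> sets (sample_space n)"
    "{X \<in> space (sample_space n). a < real (npts n X S)} \<in> sets (sample_space n)"
    "{X \<in> space (sample_space n). real (npts n X S) < a} \<in> sets (sample_space n)"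
  using S by measurable

lemma chernoff:
  assumes S: "S \<in> sets borel"
  shows "measure (sample_space n) {X \<in> space (sample_space n). t * a \<le> t * real (npts n X S)}
       \<le> exp (- t * a) * (1 - measure unif_sq S + measure unif_sq S * exp t) ^ n"
proof -
  interpret M: prob_space "sample_space n" by (rule sample_prob)
  let ?M = "sample_space n"
  let ?u = "\<lambda>X. ennreal (exp (t * real (npts n X S)))"
  let ?c = "ennreal (exp (- t * a))"
  let ?E = "{X \<in> space ?M. t * a \<le> t * real (npts n X S)}"
  have um: "?u \<in> borel_measurable ?M" using S by measurable
  have E: "?E = {X \<in> space ?M. 1 \<le> ?c * ?u X}"
  proof -
    have "\<And>X. ?c * ?u X = ennreal (exp (t * real (npts n X S) - t * a))"
      by (simp add: ennreal_mult[symmetric] exp_add[symmetric] algebra_simps)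
    then show ?thesis by (auto simp: algebra_simps)
  qed
  have "emeasure ?M ?E \<le> ?c * (\<integral>\<^sup>+X. ?u X * indicator (space ?M) X \<partial>?M)"
    unfolding E by (rule nn_integral_Markov_inequality) (use um in auto)
  also have "(\<integral>\<^sup>+X. ?u X * indicator (space ?M) X \<partial>?M) = (\<integral>\<^sup>+X. ?u X \<partial>?M)"
    by (rule nn_integral_cong) simp
  also have "\<dots> = ennreal ((1 - measure unif_sq S + measure unif_sq S * exp t) ^ n)"
    by (rule mgf[OF S])
  also have "?c * \<dots> = ennreal (exp (- t * a) * (1 - measure unif_sq S + measure unif_sq S * exp t) ^ n)"
  proof -
    have "measure unif_sq S \<le> 1" by (rule prob_space.prob_le_1[OF unif_sq_prob])
    then have h: "0 \<le> 1 - measure unif_sq S + measure unif_sq S * exp t" by simp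
    show ?thesis by (rule ennreal_mult[symmetric]) (use h in simp_all)
  qed
  finally have fin: "ennreal (measure ?M ?E) \<le> ennreal (exp (- t * a) * (1 - measure unif_sq S + measure unif_sq S * exp t) ^ n)"
    by (simp add: M.emeasure_eq_measure)
  have "measure unif_sq S \<le> 1" by (rule prob_space.prob_le_1[OF unif_sq_prob])
  then have h: "0 \<le> 1 - measure unif_sq S + measure unif_sq S * exp t" by simp
  show ?thesis using fin h by (subst (asm) ennreal_le_iff) auto
qed


lemma pow_exp_bound:
  assumes "0 \<le> p" "p \<le> 1"
  shows "(1 - p + p * exp t) ^ n \<le> exp (real n * p * (exp t - 1))"
proof -
  have b0: "0 \<le> 1 - p + p * exp t" using assms by simp
  have "1 - p + p * exp t \<le> exp (p * (exp t - 1))"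
    using exp_ge_add_one_self[of "p * (exp t - 1)"] by (simp add: algebra_simps)
  then have "(1 - p + p * exp t) ^ n \<le> exp (p * (exp t - 1)) ^ n"
    using b0 by (rule power_mono)
  also have "\<dots> = exp (real n * p * (exp t - 1))"
    by (simp add: exp_of_nat_mult[symmetric] mult.assoc)
  finally show ?thesis .
qed

lemma upper_tail:
  assumes S: "S \<in> sets borel" and d: "0 < \<delta>" "\<delta> < 1" and T: "0 \<le> T"
    and mu: "real n * measure unif_sq S \<le> T"
  shows "measure (sample_space n) {X \<in> space (sample_space n). (1 + \<delta>) * T < real (npts n X S)}
     \<le> exp (- (\<delta>^2 * T / 4))"
proof -
  interpret M: prob_space "sample_space n" by (rule sample_prob)
  define p where "p = measure unif_sq S"
  have p: "0 \<le> p" "p \<le> 1" unfolding p_def by (simp_all add: prob_space.prob_le_1[OF unif_sq_prob])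
  define t where "t = \<delta> / 2"
  have t: "0 < t" "t \<le> 1" using d by (auto simp: t_def)
  have sub: "{X \<in> space (sample_space n). (1 + \<delta>) * T < real (npts n X S)}
      \<subseteq> {X \<in> space (sample_space n). t * ((1 + \<delta>) * T) \<le> t * real (npts n X S)}"
    using t by auto
  have "measure (sample_space n) {X \<in> space (sample_space n). (1 + \<delta>) * T < real (npts n X S)}
      \<le> measure (sample_space n) {X \<in> space (sample_space n). t * ((1 + \<delta>) * T) \<le> t * real (npts n X S)}"
    by (rule M.finite_measure_mono[OF sub]) (use S in measurable)
  also have "\<dots> \<le> exp (- t * ((1 + \<delta>) * T)) * (1 - p + p * exp t) ^ n"
    unfolding p_def by (rule chernoff[OF S])
  also have "\<dots> \<le> exp (- t * ((1 + \<delta>) * T)) * exp (real n * p * (exp t - 1))"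
    by (intro mult_left_mono pow_exp_bound p) simp
  also have "\<dots> \<le> exp (- t * ((1 + \<delta>) * T)) * exp (T * (t + t^2))"
  proof -
    have e1: "exp t - 1 \<le> t + t^2" using exp_bound[of t] t by (simp add: power2_eq_square)
    have e0: "0 \<le> exp t - 1" using t by simp
    have "real n * p * (exp t - 1) \<le> T * (exp t - 1)"
      using mu e0 unfolding p_def by (intro mult_right_mono) auto
    also have "\<dots> \<le> T * (t + t^2)" using T e1 by (intro mult_left_mono) auto
    finally show ?thesis by simp
  qed
  also have "\<dots> = exp (- (\<delta>^2 * T / 4))"
    unfolding t_def by (simp add: exp_add[symmetric] power2_eq_square field_simps)
  finally show ?thesis .
qed


lemma lower_alg:
  fixes \<delta> T :: real
  assumes d: "0 < \<delta>" "\<delta> < 1" and T: "0 \<le> T"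
  shows "(\<delta>/2) * ((1 - \<delta>) * T) - (1 - \<delta>/10) * T * ((\<delta>/2) / (1 + \<delta>/2)) \<le> - (\<delta>^2 * T / 5)"
proof -
  have pos: "0 < 1 + \<delta>/2" using d by simp
  have key: "(1 - \<delta>) * (1 + \<delta>/2) - (1 - \<delta>/10) \<le> - (2 * \<delta> / 5) * (1 + \<delta>/2)"
  proof -
    have h: "0 < \<delta> * \<delta>" using d by simp
    have e1: "(1 - \<delta>) * (1 + \<delta>/2) - (1 - \<delta>/10) = - (2 * \<delta> / 5) - \<delta> * \<delta> / 2"
      by (simp add: field_simps)
    have e2: "- (2 * \<delta> / 5) * (1 + \<delta>/2) = - (2 * \<delta> / 5) - \<delta> * \<delta> / 5"
      by (simp add: field_simps)
    show ?thesis unfolding e1 e2 using h by simp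
  qed
  have "(\<delta>/2) * ((1 - \<delta>) * T) - (1 - \<delta>/10) * T * ((\<delta>/2) / (1 + \<delta>/2))
      = (\<delta>/2) * T * (((1 - \<delta>) * (1 + \<delta>/2) - (1 - \<delta>/10)) / (1 + \<delta>/2))"
    using pos by (simp add: field_simps)
  also have "\<dots> \<le> (\<delta>/2) * T * ((- (2 * \<delta> / 5) * (1 + \<delta>/2)) / (1 + \<delta>/2))"
    using d T pos key by (intro mult_left_mono divide_right_mono) auto
  also have "\<dots> = - (\<delta>^2 * T / 5)" using pos by (simp add: field_simps power2_eq_square)
  finally show ?thesis .
qed

lemma lower_tail:
  assumes S: "S \<in> sets borel" and d: "0 < \<delta>" "\<delta> < 1" and T: "0 \<le> T"
    and mu: "(1 - \<delta>/10) * T \<le> real n * measure unif_sq S"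
  shows "measure (sample_space n) {X \<in> space (sample_space n). real (npts n X S) < (1 - \<delta>) * T}
     \<le> exp (- (\<delta>^2 * T / 5))"
proof -
  interpret M: prob_space "sample_space n" by (rule sample_prob)
  define p where "p = measure unif_sq S"
  have p: "0 \<le> p" "p \<le> 1" unfolding p_def by (simp_all add: prob_space.prob_le_1[OF unif_sq_prob])
  define s where "s = \<delta> / 2"
  define t where "t = - s"
  have s: "0 < s" using d by (auto simp: s_def)
  have sub: "{X \<in> space (sample_space n). real (npts n X S) < (1 - \<delta>) * T}
      \<subseteq> {X \<in> space (sample_space n). t * ((1 - \<delta>) * T) \<le> t * real (npts n X S)}"
    using s unfolding t_def by (auto simp: mult_le_cancel_left)
  have "measure (sample_space n) {X \<in> space (sample_space n). real (npts n X S) < (1 - \<delta>) * T}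
      \<le> measure (sample_space n) {X \<in> space (sample_space n). t * ((1 - \<delta>) * T) \<le> t * real (npts n X S)}"
    by (rule M.finite_measure_mono[OF sub]) (use S in measurable)
  also have "\<dots> \<le> exp (- t * ((1 - \<delta>) * T)) * (1 - p + p * exp t) ^ n"
    unfolding p_def by (rule chernoff[OF S])
  also have "\<dots> \<le> exp (- t * ((1 - \<delta>) * T)) * exp (real n * p * (exp t - 1))"
    by (intro mult_left_mono pow_exp_bound p) simp
  also have "\<dots> \<le> exp (s * ((1 - \<delta>) * T)) * exp (- ((1 - \<delta>/10) * T * (s / (1 + s))))"
  proof -
    have "exp s \<ge> 1 + s" by (rule exp_ge_add_one_self)
    then have "exp t \<le> 1 / (1 + s)" unfolding t_def using s by (simp add: exp_minus field_simps)
    then have e1: "exp t - 1 \<le> - (s / (1 + s))" using s by (simp add: field_simps)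
    have "real n * p * (exp t - 1) \<le> real n * p * (- (s / (1 + s)))"
      using e1 p by (intro mult_left_mono) auto
    also have "\<dots> \<le> (1 - \<delta>/10) * T * (- (s / (1 + s)))"
      using mu s unfolding p_def by (intro mult_right_mono_neg) auto
    finally have "real n * p * (exp t - 1) \<le> - ((1 - \<delta>/10) * T * (s / (1 + s)))" by simp
    then show ?thesis unfolding t_def by simp
  qed
  also have "\<dots> = exp ((\<delta>/2) * ((1 - \<delta>) * T) - (1 - \<delta>/10) * T * ((\<delta>/2) / (1 + \<delta>/2)))"
    unfolding s_def by (simp add: exp_add[symmetric] exp_diff)
  also have "\<dots> \<le> exp (- (\<delta>^2 * T / 5))"
    using lower_alg[OF d T] by simp
  finally show ?thesis .
qed


lemma boxes_borel: "S \<in> boxes k d r \<Longrightarrow> S \<in> sets borel"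
  unfolding boxes_def Let_def grid_sq_def by (auto intro!: borel_Times)

lemma finite_boxes: "finite (boxes k d r)"
  unfolding boxes_def Let_def by simp

lemma card_boxes: "card (boxes k d r) \<le> (ncells k r * k * d)^2"
proof -
  let ?N = "ncells k r * k * d"
  have "card (boxes k d r) \<le> card ({..<?N} \<times> {..<?N})"
    unfolding boxes_def Let_def by (rule card_image_le) simp
  also have "\<dots> = ?N^2" by (simp add: card_cartesian_product power2_eq_square)
  finally show ?thesis .
qed

lemma box_measure:
  assumes "S \<in> boxes k d r"
  shows "measure unif_sq S = 1 / real (ncells k r * k * d) ^ 2"
proof -
  let ?N = "ncells k r * k * d"
  obtain i j where ij: "i < ?N" "j < ?N" "S = grid_sq ?N (i,j)"
    using assms unfolding boxes_def Let_def by auto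
  show ?thesis using grid_sq_meas[OF ij(1,2)] ij(3) by (simp add: measure_def)
qed

lemma finite_cells: "finite (cells k r)"
  unfolding cells_def by simp

lemma good_meas1:
  "{X \<in> space (sample_space n). delta_good k d \<delta> n r X Q} \<in> sets (sample_space n)"
  unfolding delta_good_def
proof (rule sets.sets_Collect_finite_All[OF _ finite_boxes])
  fix S assume "S \<in> boxes k d r"
  then have [measurable]: "S \<in> sets borel" by (rule boxes_borel)
  show "{X \<in> space (sample_space n). S \<subseteq> Q \<longrightarrow>
        (1 - \<delta>) * real n * r\<^sup>2 / (4 * real d ^ 2) \<le> real (npts n X S) \<and>
        real (npts n X S) \<le> (1 + \<delta>) * real n * r\<^sup>2 / (4 * real d ^ 2)} \<in> sets (sample_space n)"
    by measurable
qed

lemma good_meas2: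
  "{X \<in> space (sample_space n). \<forall>Q\<in>cells k r. delta_good k d \<delta> n r X Q} \<in> sets (sample_space n)"
  by (rule sets.sets_Collect_finite_All[OF good_meas1 finite_cells])


lemma main_bound:
  fixes k d n :: nat and r \<delta> :: real
  defines "N \<equiv> ncells k r * k * d" and "T \<equiv> real n * r^2 / (4 * real d^2)"
  assumes d: "0 < \<delta>" "\<delta> < 1"
    and mu1: "(1 - \<delta>/10) * T \<le> real n / real N^2" and mu2: "real n / real N^2 \<le> T"
  shows "measure (sample_space n) {X \<in> space (sample_space n). \<forall>Q\<in>cells k r. delta_good k d \<delta> n r X Q}
           \<ge> 1 - 2 * real N^2 * exp (- (\<delta>^2 * T / 5))"
    and "measure (sample_space n) {X \<in> space (sample_space n). delta_good k d \<delta> n r X Q}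
           \<ge> 1 - 2 * real N^2 * exp (- (\<delta>^2 * T / 5))"
proof -
  interpret M: prob_space "sample_space n" by (rule sample_prob)
  let ?M = "sample_space n"
  have T: "0 \<le> T" unfolding T_def by simp
  define L where "L S = {X \<in> space ?M. real (npts n X S) < (1 - \<delta>) * T}" for S
  define U where "U S = {X \<in> space ?M. (1 + \<delta>) * T < real (npts n X S)}" for S
  define B where "B = (\<Union>S\<in>boxes k d r. L S \<union> U S)"
  have LU: "L S \<union> U S \<in> sets ?M" if "S \<in> boxes k d r" for S
    using boxes_borel[OF that] unfolding L_def U_def by (intro sets.Un count_event_meas)
  have Bm: "B \<in> sets ?M" unfolding B_def using LU finite_boxes by (intro sets.finite_UN) auto
  have "measure ?M B \<le> (\<Sum>S\<in>boxes k d r. measure ?M (L S \<union> U S))"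
    unfolding B_def by (rule M.finite_measure_subadditive_finite[OF finite_boxes]) (use LU in auto)
  also have "\<dots> \<le> (\<Sum>S\<in>boxes k d r. 2 * exp (- (\<delta>^2 * T / 5)))"
  proof (rule sum_mono)
    fix S assume S: "S \<in> boxes k d r"
    have Sb: "S \<in> sets borel" by (rule boxes_borel[OF S])
    have mS: "real n * measure unif_sq S = real n / real N^2"
      using box_measure[OF S] unfolding N_def by simp
    have "measure ?M (L S \<union> U S) \<le> measure ?M (L S) + measure ?M (U S)"
      by (rule measure_subadditive) (use Sb in \<open>auto simp: L_def U_def intro: count_event_meas\<close>)
    also have "measure ?M (L S) \<le> exp (- (\<delta>^2 * T / 5))"
      unfolding L_def by (rule lower_tail[OF Sb d T]) (use mS mu1 in simp)
    also have "measure ?M (U S) \<le> exp (- (\<delta>^2 * T / 4))"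
      unfolding U_def by (rule upper_tail[OF Sb d T]) (use mS mu2 in simp)
    also have "exp (- (\<delta>^2 * T / 4)) \<le> exp (- (\<delta>^2 * T / 5))"
      using T by (simp add: frac_le)
    finally show "measure ?M (L S \<union> U S) \<le> 2 * exp (- (\<delta>^2 * T / 5))" by simp
  qed
  also have "\<dots> = real (card (boxes k d r)) * (2 * exp (- (\<delta>^2 * T / 5)))" by simp
  also have "\<dots> \<le> real N^2 * (2 * exp (- (\<delta>^2 * T / 5)))"
  proof -
    have "real (card (boxes k d r)) \<le> real (N^2)" using card_boxes[of k d r] unfolding N_def by (simp only: of_nat_le_iff)
    then show ?thesis by (intro mult_right_mono) simp_all
  qed
  finally have mB: "measure ?M B \<le> 2 * real N^2 * exp (- (\<delta>^2 * T / 5))" by simp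
  have good: "delta_good k d \<delta> n r X Q" if "X \<in> space ?M - B" for X Q
  proof -
    have "\<forall>S\<in>boxes k d r. (1 - \<delta>) * T \<le> real (npts n X S) \<and> real (npts n X S) \<le> (1 + \<delta>) * T"
      using that unfolding B_def L_def U_def by auto
    moreover have "(1 - \<delta>) * real n * r\<^sup>2 / (4 * real d ^ 2) = (1 - \<delta>) * T"
      "(1 + \<delta>) * real n * r\<^sup>2 / (4 * real d ^ 2) = (1 + \<delta>) * T" unfolding T_def by simp_all
    ultimately show ?thesis unfolding delta_good_def by simp
  qed
  have low: "1 - 2 * real N^2 * exp (- (\<delta>^2 * T / 5)) \<le> measure ?M (space ?M - B)"
    using M.prob_compl[OF Bm] mB by simp
  show "measure ?M {X \<in> space ?M. \<forall>Q\<in>cells k r. delta_good k d \<delta> n r X Q}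
           \<ge> 1 - 2 * real N^2 * exp (- (\<delta>^2 * T / 5))"
  proof -
    have "space ?M - B \<subseteq> {X \<in> space ?M. \<forall>Q\<in>cells k r. delta_good k d \<delta> n r X Q}" using good by auto
    then have "measure ?M (space ?M - B) \<le> measure ?M {X \<in> space ?M. \<forall>Q\<in>cells k r. delta_good k d \<delta> n r X Q}"
      by (rule M.finite_measure_mono) (rule good_meas2)
    then show ?thesis using low by linarith
  qed
  show "measure ?M {X \<in> space ?M. delta_good k d \<delta> n r X Q}
           \<ge> 1 - 2 * real N^2 * exp (- (\<delta>^2 * T / 5))"
  proof -
    have "space ?M - B \<subseteq> {X \<in> space ?M. delta_good k d \<delta> n r X Q}" using good by auto
    then have "measure ?M (space ?M - B) \<le> measure ?M {X \<in> space ?M. delta_good k d \<delta> n r X Q}"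
      by (rule M.finite_measure_mono) (rule good_meas1)
    then show ?thesis using low by linarith
  qed
qed


lemma ncells_bounds:
  assumes k: "k \<ge> 1" and r: "r > 0"
  shows "real (ncells k r) \<ge> 2 / (real k * r)" "real (ncells k r) \<le> 2 / (real k * r) + 1"
proof -
  have x: "2 / (real k * r) > 0" using k r by simp
  show "real (ncells k r) \<ge> 2 / (real k * r)" unfolding ncells_def using x
    by (simp add: ceiling_le_iff le_of_int_ceiling)
  show "real (ncells k r) \<le> 2 / (real k * r) + 1" unfolding ncells_def using x
    by (simp add: of_nat_nat)
qed

lemma pointwise_arith:
  fixes k d n :: nat and r \<delta> \<gamma> :: real
  defines "R \<equiv> real (ncells k r * k * d)" and "T \<equiv> real n * r^2 / (4 * real d^2)"
  assumes k: "k \<ge> 1" and dd: "d \<ge> 1" and r: "r > 0" and n: "n \<ge> 2"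
    and d: "0 < \<delta>" "\<delta> < 1" and g: "\<gamma> > 0"
    and kr: "real k * r \<le> \<delta> / 20" and rg: "r \<ge> \<gamma> * sqrt (ln (real n) / real n)"
  shows "(1 - \<delta>/10) * T \<le> real n / R^2" "real n / R^2 \<le> T"
    "exp (- (\<delta>^2 * T / 5)) \<le> real n powr (- (\<gamma>^2 * \<delta>^2 / (24 * real d ^ 2)))"
    "2 * R^2 * real n powr (- (\<gamma>^2 * \<delta>^2 / (24 * real d ^ 2)))
       \<le> (18 * real d^2 / (\<gamma>^2 * ln 2)) * real n powr (1 - \<gamma>^2 * \<delta>^2 / (24 * real d ^ 2))"
proof -
  define y where "y = real k * r"
  have y: "0 < y" "y \<le> \<delta>/20" using k r kr by (auto simp: y_def)
  have R: "R = real (ncells k r) * real k * real d" unfolding R_def by simp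
  have lo: "R * r \<ge> 2 * real d"
  proof -
    have "real (ncells k r) * real k * r \<ge> 2 / (real k * r) * real k * r"
      using ncells_bounds(1)[OF k r] k r by (intro mult_right_mono) auto
    also have "2 / (real k * r) * real k * r = 2" using k r by simp
    finally have "2 \<le> real (ncells k r) * real k * r" .
    then have "2 * real d \<le> (real (ncells k r) * real k * r) * real d" by (intro mult_right_mono) auto
    then show ?thesis unfolding R by (simp add: algebra_simps)
  qed
  have hi: "R * r \<le> (2 + y) * real d"
  proof -
    have "real (ncells k r) * real k * r \<le> (2 / (real k * r) + 1) * real k * r"
      using ncells_bounds(2)[OF k r] k r by (intro mult_right_mono) auto
    also have "\<dots> = 2 + y" using k r by (simp add: y_def field_simps)
    finally have "real (ncells k r) * real k * r \<le> 2 + y" .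
    then have "(real (ncells k r) * real k * r) * real d \<le> (2 + y) * real d" by (intro mult_right_mono) auto
    then show ?thesis unfolding R by (simp add: algebra_simps)
  qed
  have dpos: "real d > 0" using dd by simp
  have npos: "real n > 0" using n by simp
  have Rr0: "R * r > 0" using lo dpos by linarith
  have Rpos: "R > 0" using Rr0 r by (simp add: zero_less_mult_iff)
  have P2: "(R * r)^2 \<le> (4 + \<delta>/4) * real d^2"
  proof -
    have "(R * r)^2 \<le> ((2 + y) * real d)^2" using hi Rr0 by (intro power_mono) auto
    also have "\<dots> = (2 + y)^2 * real d^2" by (simp add: power_mult_distrib)
    also have "(2 + y)^2 \<le> 4 + \<delta>/4"
    proof -
      have yy: "y * y \<le> y * 1" using y d by (intro mult_left_mono) auto
      have e: "(2 + y)^2 = 4 + 4 * y + y * y" by (simp add: power2_eq_square algebra_simps)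
      show ?thesis unfolding e using yy y by linarith
    qed
    then have "(2 + y)^2 * real d^2 \<le> (4 + \<delta>/4) * real d^2" by (intro mult_right_mono) auto
    finally show ?thesis .
  qed
  have key1: "(1 - \<delta>/10) * (R * r)^2 \<le> 4 * real d^2"
  proof -
    have "(1 - \<delta>/10) * (R * r)^2 \<le> (1 - \<delta>/10) * ((4 + \<delta>/4) * real d^2)"
      using P2 d by (intro mult_left_mono) auto
    also have "\<dots> = (4 - 3 * \<delta> / 20 - \<delta> * \<delta> / 40) * real d^2" by (simp add: field_simps)
    also have "\<dots> \<le> 4 * real d^2"
    proof -
      have "0 \<le> \<delta> * \<delta>" by simp
      then have "4 - 3 * \<delta> / 20 - \<delta> * \<delta> / 40 \<le> 4" using d by linarith
      then show ?thesis by (intro mult_right_mono) auto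
    qed
    finally show ?thesis .
  qed
  have key2: "4 * real d^2 \<le> (R * r)^2"
  proof -
    have "(2 * real d)^2 \<le> (R * r)^2" using lo dpos by (intro power_mono) auto
    then show ?thesis by (simp add: power_mult_distrib)
  qed
  show "(1 - \<delta>/10) * T \<le> real n / R^2"
  proof -
    have "(1 - \<delta>/10) * T = ((1 - \<delta>/10) * (R * r)^2) * real n / (4 * real d^2 * R^2)"
      unfolding T_def using Rpos dpos by (simp add: field_simps power_mult_distrib)
    also have "\<dots> \<le> (4 * real d^2) * real n / (4 * real d^2 * R^2)"
      using key1 npos Rpos dpos by (intro divide_right_mono mult_right_mono) auto
    also have "\<dots> = real n / R^2" using dpos by simp
    finally show ?thesis .
  qed
  show "real n / R^2 \<le> T"
  proof -
    have "real n / R^2 = (4 * real d^2) * real n / (4 * real d^2 * R^2)" using dpos by simp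
    also have "\<dots> \<le> (R * r)^2 * real n / (4 * real d^2 * R^2)"
      using key2 npos Rpos dpos by (intro divide_right_mono mult_right_mono) auto
    also have "\<dots> = T" unfolding T_def using Rpos dpos by (simp add: field_simps power_mult_distrib)
    finally show ?thesis .
  qed
  have lnpos: "ln (real n) \<ge> ln 2" using n by simp
  have ln2: "ln (2::real) > 0" by simp
  have lnn0: "0 \<le> ln (real n)" using n by simp
  have r2: "r^2 \<ge> \<gamma>^2 * (ln (real n) / real n)"
  proof -
    have a0: "0 \<le> ln (real n) / real n" using lnpos ln2 npos by simp
    have "(\<gamma> * sqrt (ln (real n) / real n))^2 \<le> r^2" using rg g a0 by (intro power_mono) auto
    then show ?thesis using a0 by (simp add: power_mult_distrib)
  qed
  have T_lo: "T \<ge> \<gamma>^2 * ln (real n) / (4 * real d^2)"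
  proof -
    have "\<gamma>^2 * ln (real n) = real n * (\<gamma>^2 * (ln (real n) / real n))" using npos by simp
    also have "\<dots> \<le> real n * r^2" using r2 npos by (intro mult_left_mono) auto
    finally show ?thesis unfolding T_def using dpos by (intro divide_right_mono) auto
  qed
  show "exp (- (\<delta>^2 * T / 5)) \<le> real n powr (- (\<gamma>^2 * \<delta>^2 / (24 * real d ^ 2)))"
  proof -
    have "\<gamma>^2 * \<delta>^2 / (24 * real d ^ 2) * ln (real n) \<le> \<delta>^2 * (\<gamma>^2 * ln (real n) / (4 * real d^2)) / 5"
    proof -
      have "0 \<le> \<gamma>^2 * \<delta>^2 * ln (real n) / real d ^ 2" using lnn0 dpos by (intro divide_nonneg_pos mult_nonneg_nonneg) auto
      moreover have e1: "\<gamma>^2 * \<delta>^2 / (24 * real d ^ 2) * ln (real n) = (\<gamma>^2 * \<delta>^2 * ln (real n) / real d ^ 2) / 24"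
        by (simp add: divide_simps)
      moreover have e2: "\<delta>^2 * (\<gamma>^2 * ln (real n) / (4 * real d^2)) / 5 = (\<gamma>^2 * \<delta>^2 * ln (real n) / real d ^ 2) / 20"
        by (simp add: divide_simps)
      ultimately show ?thesis unfolding e1 e2 by (intro divide_left_mono) auto
    qed
    also have "\<dots> \<le> \<delta>^2 * T / 5" using T_lo by (intro divide_right_mono mult_left_mono) auto
    finally have "- (\<delta>^2 * T / 5) \<le> - (\<gamma>^2 * \<delta>^2 / (24 * real d ^ 2)) * ln (real n)" by simp
    then show ?thesis using npos by (simp add: powr_def)
  qed
  show "2 * R^2 * real n powr (- (\<gamma>^2 * \<delta>^2 / (24 * real d ^ 2)))
       \<le> (18 * real d^2 / (\<gamma>^2 * ln 2)) * real n powr (1 - \<gamma>^2 * \<delta>^2 / (24 * real d ^ 2))"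
  proof -
    let ?c = "\<gamma>^2 * \<delta>^2 / (24 * real d ^ 2)"
    have "(R * r)^2 \<le> (3 * real d)^2"
    proof -
      have "(2 + y) * real d \<le> 3 * real d" using y d dpos by (intro mult_right_mono) auto
      then show ?thesis using hi Rr0 by (intro power_mono) auto
    qed
    then have Rr9: "R^2 * r^2 \<le> 9 * real d^2" by (simp add: power_mult_distrib)
    have r2': "r^2 \<ge> \<gamma>^2 * ln 2 / real n"
    proof -
      have "\<gamma>^2 * ln 2 / real n \<le> \<gamma>^2 * ln (real n) / real n"
        using lnpos npos by (intro divide_right_mono mult_left_mono) auto
      then show ?thesis using r2 by simp
    qed
    have gl: "\<gamma>^2 * ln 2 > 0" using g ln2 by simp
    have R2: "R^2 \<le> 9 * real d^2 * real n / (\<gamma>^2 * ln 2)"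
    proof -
      have "R^2 * (\<gamma>^2 * ln 2 / real n) \<le> R^2 * r^2" using r2' by (intro mult_left_mono) auto
      also have "\<dots> \<le> 9 * real d^2" by (rule Rr9)
      finally have "R^2 * (\<gamma>^2 * ln 2 / real n) \<le> 9 * real d^2" .
      then have "R^2 * (\<gamma>^2 * ln 2 / real n) * real n \<le> 9 * real d^2 * real n"
        using npos by (intro mult_right_mono) auto
      then have "R^2 * (\<gamma>^2 * ln 2) \<le> 9 * real d^2 * real n" using npos by simp
      then show ?thesis using gl by (simp add: pos_le_divide_eq)
    qed
    have "2 * R^2 * real n powr (- ?c) \<le> 2 * (9 * real d^2 * real n / (\<gamma>^2 * ln 2)) * real n powr (- ?c)"
      using R2 by (intro mult_right_mono mult_left_mono) auto
    also have "\<dots> = (18 * real d^2 / (\<gamma>^2 * ln 2)) * (real n * real n powr (- ?c))" by simp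
    also have "real n * real n powr (- ?c) = real n powr (1 - ?c)"
    proof -
      have "real n powr (1 - ?c) = real n powr 1 * real n powr (- ?c)"
        unfolding powr_add[symmetric] by simp
      then show ?thesis using npos by simp
    qed
    finally show ?thesis .
  qed
qed


lemma ev_conds:
  fixes r :: "nat \<Rightarrow> real"
  assumes k: "k \<ge> 1" and d: "\<delta> > 0" and lim: "r \<longlonglongrightarrow> 0"
    and ev: "\<forall>\<^sub>F n in sequentially. r n \<ge> \<gamma> * sqrt (ln (real n) / real n)"
  shows "\<forall>\<^sub>F n in sequentially. n \<ge> 2 \<and> real k * r n \<le> \<delta> / 20 \<and> r n \<ge> \<gamma> * sqrt (ln (real n) / real n)"
proof -
  have pos: "\<delta> / (20 * real k) > 0" using k d by simp
  have e1: "\<forall>\<^sub>F n in sequentially. r n < \<delta> / (20 * real k)"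
    by (rule order_tendstoD(2)[OF lim pos])
  have e2: "\<forall>\<^sub>F n in sequentially. n \<ge> (2::nat)" by (rule eventually_ge_at_top)
  show ?thesis
  proof (rule eventually_mono[OF eventually_conj[OF e1 eventually_conj[OF e2 ev]]])
    fix n assume h: "r n < \<delta> / (20 * real k) \<and> 2 \<le> n \<and> \<gamma> * sqrt (ln (real n) / real n) \<le> r n"
    have "real k * r n \<le> real k * (\<delta> / (20 * real k))" using h k by (intro mult_left_mono) auto
    also have "\<dots> = \<delta> / 20" using k by simp
    finally show "2 \<le> n \<and> real k * r n \<le> \<delta> / 20 \<and> \<gamma> * sqrt (ln (real n) / real n) \<le> r n" using h by simp
  qed
qed

lemma pointwise_final:
  fixes k d n :: nat and r \<delta> \<gamma> :: real
  assumes k: "k \<ge> 1" and dd: "d \<ge> 1" and r: "r > 0" and n: "n \<ge> 2"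
    and d: "0 < \<delta>" "\<delta> < 1" and g: "\<gamma> > 0"
    and kr: "real k * r \<le> \<delta> / 20" and rg: "r \<ge> \<gamma> * sqrt (ln (real n) / real n)"
  shows "measure (sample_space n) {X \<in> space (sample_space n). delta_good k d \<delta> n r X Q}
           \<ge> 1 - 2 * real (ncells k r * k * d) ^ 2 * real n powr (- (\<gamma>\<^sup>2 * \<delta>\<^sup>2 / (24 * real d ^ 2)))"
    "measure (sample_space n) {X \<in> space (sample_space n). \<forall>Q\<in>cells k r. delta_good k d \<delta> n r X Q}
           \<ge> 1 - (18 * real d^2 / (\<gamma>^2 * ln 2)) * real n powr (1 - \<gamma>^2 * \<delta>^2 / (24 * real d ^ 2))"
proof -
  note pa = pointwise_arith[OF k dd r n d g kr rg]
  note mb = main_bound[where k=k and d=d and n=n and r=r and \<delta>=\<delta>, OF d pa(1) pa(2)]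
  have R0: "0 \<le> 2 * real (ncells k r * k * d) ^ 2" by simp
  have ex: "2 * real (ncells k r * k * d) ^ 2 * exp (- (\<delta>^2 * (real n * r^2 / (4 * real d^2)) / 5))
      \<le> 2 * real (ncells k r * k * d) ^ 2 * real n powr (- (\<gamma>\<^sup>2 * \<delta>\<^sup>2 / (24 * real d ^ 2)))"
    using pa(3) R0 by (intro mult_left_mono) auto
  show "measure (sample_space n) {X \<in> space (sample_space n). delta_good k d \<delta> n r X Q}
           \<ge> 1 - 2 * real (ncells k r * k * d) ^ 2 * real n powr (- (\<gamma>\<^sup>2 * \<delta>\<^sup>2 / (24 * real d ^ 2)))"
    using mb(2)[of Q] ex by linarith
  show "measure (sample_space n) {X \<in> space (sample_space n). \<forall>Q\<in>cells k r. delta_good k d \<delta> n r X Q}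
           \<ge> 1 - (18 * real d^2 / (\<gamma>^2 * ln 2)) * real n powr (1 - \<gamma>^2 * \<delta>^2 / (24 * real d ^ 2))"
    using mb(1) ex pa(4) by linarith
qed

theorem lemma1:
  fixes k d :: nat
  assumes "odd k" and "odd d"
  shows "\<forall>\<delta>::real. 0 < \<delta> \<and> \<delta> < 1 \<longrightarrow>
    (\<exists>\<gamma>>0. \<forall>r::nat \<Rightarrow> real. (\<forall>n. r n > 0) \<longrightarrow> r \<longlonglongrightarrow> 0 \<longrightarrow>
        (\<forall>\<^sub>F n in sequentially. r n \<ge> \<gamma> * sqrt (ln (real n) / real n)) \<longrightarrow>
        (\<forall>\<^sub>F n in sequentially. \<forall>Q\<in>cells k (r n).
            measure (sample_space n) {X \<in> space (sample_space n). delta_good k d \<delta> n (r n) X Q}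
              \<ge> 1 - 2 * real (ncells k (r n) * k * d) ^ 2
                    * real n powr (- (\<gamma>\<^sup>2 * \<delta>\<^sup>2 / (24 * real d ^ 2)))))
    \<and> (\<forall>\<gamma>>0. \<gamma>\<^sup>2 > 24 * real d ^ 2 / \<delta>\<^sup>2 \<longrightarrow>
        (\<forall>r::nat \<Rightarrow> real. (\<forall>n. r n > 0) \<longrightarrow> r \<longlonglongrightarrow> 0 \<longrightarrow>
          (\<forall>\<^sub>F n in sequentially. r n \<ge> \<gamma> * sqrt (ln (real n) / real n)) \<longrightarrow>
          (\<lambda>n. measure (sample_space n)
                 {X \<in> space (sample_space n). \<forall>Q\<in>cells k (r n). delta_good k d \<delta> n (r n) X Q})
            \<longlonglongrightarrow> 1))"
proof (rule allI, rule impI, rule conjI)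
  fix \<delta> :: real
  assume dd: "0 < \<delta> \<and> \<delta> < 1"
  then have d: "0 < \<delta>" "\<delta> < 1" by auto
  have k1: "k \<ge> 1" using assms(1) by (cases k) auto
  have d1: "d \<ge> 1" using assms(2) by (cases d) auto
  show "\<exists>\<gamma>>0. \<forall>r::nat \<Rightarrow> real. (\<forall>n. r n > 0) \<longrightarrow> r \<longlonglongrightarrow> 0 \<longrightarrow>
        (\<forall>\<^sub>F n in sequentially. r n \<ge> \<gamma> * sqrt (ln (real n) / real n)) \<longrightarrow>
        (\<forall>\<^sub>F n in sequentially. \<forall>Q\<in>cells k (r n).
            measure (sample_space n) {X \<in> space (sample_space n). delta_good k d \<delta> n (r n) X Q}
              \<ge> 1 - 2 * real (ncells k (r n) * k * d) ^ 2
                    * real n powr (- (\<gamma>\<^sup>2 * \<delta>\<^sup>2 / (24 * real d ^ 2))))"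
  proof (intro exI[of _ 1] conjI allI impI)
    fix r :: "nat \<Rightarrow> real"
    assume rp: "\<forall>n. r n > 0" and lim: "r \<longlonglongrightarrow> 0"
      and ev: "\<forall>\<^sub>F n in sequentially. r n \<ge> 1 * sqrt (ln (real n) / real n)"
    show "\<forall>\<^sub>F n in sequentially. \<forall>Q\<in>cells k (r n).
            measure (sample_space n) {X \<in> space (sample_space n). delta_good k d \<delta> n (r n) X Q}
              \<ge> 1 - 2 * real (ncells k (r n) * k * d) ^ 2
                    * real n powr (- (1\<^sup>2 * \<delta>\<^sup>2 / (24 * real d ^ 2)))"
      using ev_conds[OF k1 d(1) lim ev]
    proof (rule eventually_mono)
      fix n assume h: "2 \<le> n \<and> real k * r n \<le> \<delta> / 20 \<and> 1 * sqrt (ln (real n) / real n) \<le> r n"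
      show "\<forall>Q\<in>cells k (r n).
            measure (sample_space n) {X \<in> space (sample_space n). delta_good k d \<delta> n (r n) X Q}
              \<ge> 1 - 2 * real (ncells k (r n) * k * d) ^ 2
                    * real n powr (- (1\<^sup>2 * \<delta>\<^sup>2 / (24 * real d ^ 2)))"
      proof
        fix Q
        have rn: "r n > 0" using rp by simp
        have h3: "2 \<le> n" "real k * r n \<le> \<delta> / 20" "1 * sqrt (ln (real n) / real n) \<le> r n" using h by auto
        show "measure (sample_space n) {X \<in> space (sample_space n). delta_good k d \<delta> n (r n) X Q}
              \<ge> 1 - 2 * real (ncells k (r n) * k * d) ^ 2
                    * real n powr (- (1\<^sup>2 * \<delta>\<^sup>2 / (24 * real d ^ 2)))"
          by (rule pointwise_final(1)[OF k1 d1 rn h3(1) d(1) d(2) zero_less_one h3(2) h3(3)])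
      qed
    qed
  qed simp
  show "\<forall>\<gamma>>0. \<gamma>\<^sup>2 > 24 * real d ^ 2 / \<delta>\<^sup>2 \<longrightarrow>
        (\<forall>r::nat \<Rightarrow> real. (\<forall>n. r n > 0) \<longrightarrow> r \<longlonglongrightarrow> 0 \<longrightarrow>
          (\<forall>\<^sub>F n in sequentially. r n \<ge> \<gamma> * sqrt (ln (real n) / real n)) \<longrightarrow>
          (\<lambda>n. measure (sample_space n)
                 {X \<in> space (sample_space n). \<forall>Q\<in>cells k (r n). delta_good k d \<delta> n (r n) X Q})
            \<longlonglongrightarrow> 1)"
  proof (intro allI impI)
    fix \<gamma> :: real and r :: "nat \<Rightarrow> real"
    assume g: "\<gamma> > 0" and gbig: "\<gamma>\<^sup>2 > 24 * real d ^ 2 / \<delta>\<^sup>2"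
      and rp: "\<forall>n. r n > 0" and lim: "r \<longlonglongrightarrow> 0"
      and ev: "\<forall>\<^sub>F n in sequentially. r n \<ge> \<gamma> * sqrt (ln (real n) / real n)"
    define c where "c = \<gamma>^2 * \<delta>^2 / (24 * real d ^ 2)"
    define C where "C = 18 * real d^2 / (\<gamma>^2 * ln 2)"
    have c1: "c > 1"
    proof -
      have "24 * real d ^ 2 / \<delta>\<^sup>2 * \<delta>^2 < \<gamma>^2 * \<delta>^2" using gbig d by (intro mult_strict_right_mono) auto
      then have "24 * real d ^ 2 < \<gamma>^2 * \<delta>^2" using d by simp
      then show ?thesis unfolding c_def using d1 by simp
    qed
    let ?P = "\<lambda>n. measure (sample_space n)
                 {X \<in> space (sample_space n). \<forall>Q\<in>cells k (r n). delta_good k d \<delta> n (r n) X Q}"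
    have lower: "\<forall>\<^sub>F n in sequentially. 1 - C * real n powr (1 - c) \<le> ?P n"
      using ev_conds[OF k1 d(1) lim ev]
    proof (rule eventually_mono)
      fix n assume h: "2 \<le> n \<and> real k * r n \<le> \<delta> / 20 \<and> \<gamma> * sqrt (ln (real n) / real n) \<le> r n"
      show "1 - C * real n powr (1 - c) \<le> ?P n"
      proof -
        have rn: "r n > 0" using rp by simp
        have h3: "2 \<le> n" "real k * r n \<le> \<delta> / 20" "\<gamma> * sqrt (ln (real n) / real n) \<le> r n" using h by auto
        show ?thesis unfolding C_def c_def
          by (rule pointwise_final(2)[OF k1 d1 rn h3(1) d(1) d(2) g h3(2) h3(3)])
      qed
    qed
    have upper: "\<forall>\<^sub>F n in sequentially. ?P n \<le> 1"
      by (intro always_eventually allI prob_space.prob_le_1[OF sample_prob])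
    have "(\<lambda>n. real n powr (1 - c)) \<longlonglongrightarrow> 0"
      by (rule tendsto_neg_powr) (use c1 filterlim_real_sequentially in auto)
    then have "(\<lambda>n. 1 - C * real n powr (1 - c)) \<longlonglongrightarrow> 1 - C * 0"
      by (intro tendsto_intros)
    then have l1: "(\<lambda>n. 1 - C * real n powr (1 - c)) \<longlonglongrightarrow> 1" by simp
    show "?P \<longlonglongrightarrow> 1"
      by (rule tendsto_sandwich[OF lower upper l1 tendsto_const])
  qed
qed

end
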